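(* Let $T=2$, $d=1$. On a probability space $(\Omega,\mathcal F,\mathbb P)$ let $X,\varepsilon_1,\varepsilon_2$ be independent, with $X$ standard Gaussian, $\mathbb P(\varepsilon_1=-1/2)=\mathbb P(\varepsilon_1=4)=1/2$, $\mathbb P(\varepsilon_2=-1/2)=\mathbb P(\varepsilon_2=1/2)=1/2$. Let $\mathcal F_0$ be the $\sigma$-algebra of $\mathbb P$-null sets (and their complements), $\mathcal F_1=\mathcal F_0\vee\sigma(X,\varepsilon_1)$, $\mathcal F_2=\mathcal F_1\vee\sigma(\varepsilon_2)$. Let $\mathscr S=\{S^*,\tilde S,\bar S\}$ be real-valued adapted processes with increments $\Delta S^*_1=\varepsilon_1$, $\Delta S^*_2=\varepsilon_2$; $\Delta\tilde S_1=X$, $\Delta\tilde S_2=3-X$; $\Delta\bar S_1=3$, $\Delta\bar S_2=0$. Let $U(x)=\min\{\sqrt x,2\}$ for $x\ge0$ and $U(x)=-\infty$ for $x<0$, and $w_0=1$. Then $S^*\in\mathscr S^*$, and $$u(1):=\sup_{\phi\in\mathcal A(1)}\inf_{S\in\mathscr S}\mathbb E[U(W^S_2(1,\phi))]\le1<\tilde u(1):=\sup_{\phi\in\tilde{\mathcal A}(1)}\inf_{S\in\mathscr S}\mathbb E[U(W^S_2(1,\phi))],$$ where $\mathcal A(1)=\bigcap_{S\in\mathscr S}\{\phi:W^S_t(1,\phi)\ge0\text{ a.s. for }t=0,1,2\}$ and $\tilde{\mathcal A}(1)=\bigcap_{S\in\mathscr S}\{\phi:W^S_2(1,\phi)\ge0\text{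 a.s.}\}$.
   Context: Strategies are $\phi=(\phi_1,\phi_2)$ with $\phi_1$ $\mathcal F_0$-measurable (a.s. constant) real and $\phi_2$ an $\mathcal F_1$-measurable real random variable; $W^S_t(w,\phi)=w+\sum_{s=1}^t\phi_s\Delta S_s$. For a process $S$, $D_t^S(\omega)$ is the smallest affine subspace of $\mathbb R$ containing the support of the regular conditional distribution of $\Delta S_t$ given $\mathcal F_{t-1}$ at $\omega$. NA($S$): for every strategy $\phi$, $W_T^S(0,\phi)\ge0$ a.s. implies $W_T^S(0,\phi)=0$ a.s. $\mathscr S^*$ is the set of $S^*\in\mathscr S$ with NA($S^*$) and $D_t^S\subseteq D_t^{S^*}$ a.s. for all $S\in\mathscr S$ and $t\in\{1,2\}$. *)

theory Defs
  imports "HOL-Probability.Probability"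
begin

(* A process is represented by its increments dS :: nat => 'a => real  (dS t = Delta S_t, t = 1,2).
   A strategy is a pair (c, p): phi_1 = c (a real constant), phi_2 = p (a random variable). *)

definition F0 :: "'a measure \<Rightarrow> 'a measure" where
  "F0 M = sigma (space M) (null_sets M)"

definition gen_sets :: "'a measure \<Rightarrow> ('a \<Rightarrow> real) \<Rightarrow> 'a set set" where
  "gen_sets M Y = {Y -` B \<inter> space M | B. B \<in> sets borel}"

definition F1 :: "'a measure \<Rightarrow> ('a \<Rightarrow> real) \<Rightarrow> ('a \<Rightarrow> real) \<Rightarrow> 'a measure" where
  "F1 M X e1 = sigma (space M) (null_sets M \<union> gen_sets M X \<union> gen_sets M e1)"

definition F2 :: "'a measure \<Rightarrow> ('a \<Rightarrow> real) \<Rightarrow> ('a \<Rightarrow> real) \<Rightarrow> ('a \<Rightarrow> real) \<Rightarrow> 'a measure" where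
  "F2 M X e1 e2 = sigma (space M) (null_sets M \<union> gen_sets M X \<union> gen_sets M e1 \<union> gen_sets M e2)"

definition prev_filt :: "'a measure \<Rightarrow> ('a \<Rightarrow> real) \<Rightarrow> ('a \<Rightarrow> real) \<Rightarrow> nat \<Rightarrow> 'a measure" where
  "prev_filt M X e1 t = (if t = 1 then F0 M else F1 M X e1)"

definition is_strategy :: "'a measure \<Rightarrow> real \<times> ('a \<Rightarrow> real) \<Rightarrow> bool" where
  "is_strategy G phi \<longleftrightarrow> snd phi \<in> borel_measurable G"

definition strat_at :: "real \<times> ('a \<Rightarrow> real) \<Rightarrow> nat \<Rightarrow> 'a \<Rightarrow> real" where
  "strat_at phi s \<omega> = (if s = 1 then fst phi else snd phi \<omega>)"

definition wealth :: "(nat \<Rightarrow> 'a \<Rightarrow> real) \<Rightarrow> real \<Rightarrow> real \<times> ('a \<Rightarrow> real) \<Rightarrow> nat \<Rightarrow> 'a \<Rightarrow> real" where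
  "wealth dS w phi t \<omega> = w + (\<Sum>s\<in>{1..t}. strat_at phi s \<omega> * dS s \<omega>)"

definition NA :: "'a measure \<Rightarrow> 'a measure \<Rightarrow> (nat \<Rightarrow> 'a \<Rightarrow> real) \<Rightarrow> bool" where
  "NA M G dS \<longleftrightarrow> (\<forall>phi. is_strategy G phi \<longrightarrow>
       (AE \<omega> in M. wealth dS 0 phi 2 \<omega> \<ge> 0) \<longrightarrow> (AE \<omega> in M. wealth dS 0 phi 2 \<omega> = 0))"

definition is_rcd :: "'a measure \<Rightarrow> 'a measure \<Rightarrow> ('a \<Rightarrow> real) \<Rightarrow> ('a \<Rightarrow> real measure) \<Rightarrow> bool" where
  "is_rcd M G Y \<kappa> \<longleftrightarrow>
     (\<forall>\<omega>\<in>space M. prob_space (\<kappa> \<omega>) \<and> sets (\<kappa> \<omega>) = sets borel) \<and>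
     (\<forall>B\<in>sets borel. (\<lambda>\<omega>. measure (\<kappa> \<omega>) B) \<in> borel_measurable G \<and>
        (\<forall>A\<in>sets G. (LINT \<omega>:A|M. measure (\<kappa> \<omega>) B) = measure M (A \<inter> {\<omega>\<in>space M. Y \<omega> \<in> B})))"

definition supp :: "real measure \<Rightarrow> real set" where
  "supp \<mu> = {x. \<forall>e>0. emeasure \<mu> (ball x e) > 0}"

(* D_t^S is the affine hull of the support of the r.c.d.; "D^S_t \<subseteq> D^{S'}_t a.s." *)
definition D_incl :: "'a measure \<Rightarrow> 'a measure \<Rightarrow> ('a \<Rightarrow> real) \<Rightarrow> ('a \<Rightarrow> real) \<Rightarrow> bool" where
  "D_incl M G Y Y' \<longleftrightarrow> (\<forall>\<kappa> \<kappa>'. is_rcd M G Y \<kappa> \<longrightarrow> is_rcd M G Y' \<kappa>' \<longrightarrow>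
      (AE \<omega> in M. affine hull (supp (\<kappa> \<omega>)) \<subseteq> affine hull (supp (\<kappa>' \<omega>))))"

definition Sstar_set :: "'a measure \<Rightarrow> ('a \<Rightarrow> real) \<Rightarrow> ('a \<Rightarrow> real) \<Rightarrow> (nat \<Rightarrow> 'a \<Rightarrow> real) set
    \<Rightarrow> (nat \<Rightarrow> 'a \<Rightarrow> real) set" where
  "Sstar_set M X e1 \<S> = {dS'. dS' \<in> \<S> \<and> NA M (F1 M X e1) dS' \<and>
      (\<forall>dS\<in>\<S>. \<forall>t\<in>{1,2}. D_incl M (prev_filt M X e1 t) (dS t) (dS' t))}"

definition U :: "real \<Rightarrow> ereal" where
  "U x = (if x \<ge> 0 then ereal (min (sqrt x) 2) else -\<infinity>)"

definition eexp :: "'a measure \<Rightarrow> ('a \<Rightarrow> ereal) \<Rightarrow> ereal" where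
  "eexp M f = enn2ereal (\<integral>\<^sup>+\<omega>. e2ennreal (f \<omega>) \<partial>M) - enn2ereal (\<integral>\<^sup>+\<omega>. e2ennreal (- f \<omega>) \<partial>M)"

definition adm :: "'a measure \<Rightarrow> 'a measure \<Rightarrow> (nat \<Rightarrow> 'a \<Rightarrow> real) set \<Rightarrow> real \<Rightarrow> (real \<times> ('a \<Rightarrow> real)) set" where
  "adm M G \<S> w = {phi. is_strategy G phi \<and> (\<forall>dS\<in>\<S>. \<forall>t\<in>{0,1,2}. AE \<omega> in M. wealth dS w phi t \<omega> \<ge> 0)}"

definition adm_tilde :: "'a measure \<Rightarrow> 'a measure \<Rightarrow> (nat \<Rightarrow> 'a \<Rightarrow> real) set \<Rightarrow> real \<Rightarrow> (real \<times> ('a \<Rightarrow> real)) set" where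
  "adm_tilde M G \<S> w = {phi. is_strategy G phi \<and> (\<forall>dS\<in>\<S>. AE \<omega> in M. wealth dS w phi 2 \<omega> \<ge> 0)}"

definition robust_value :: "'a measure \<Rightarrow> (nat \<Rightarrow> 'a \<Rightarrow> real) set \<Rightarrow> real \<Rightarrow> (real \<times> ('a \<Rightarrow> real)) set \<Rightarrow> ereal" where
  "robust_value M \<S> w A = (SUP phi\<in>A. INF dS\<in>\<S>. eexp M (\<lambda>\<omega>. U (wealth dS w phi 2 \<omega>)))"

end

theory Submission
  imports Defs
begin

lemma gen_sets_Int_stable: "Int_stable (gen_sets M Y)"
  unfolding Int_stable_def gen_sets_def
  apply safe
  subgoal for a b A B by (rule exI[of _ "A \<inter> B"]) auto
  done

lemma gen_sets_sub: "Y \<in> borel_measurable M \<Longrightarrow> gen_sets M Y \<subseteq> sets M"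
  unfolding gen_sets_def by auto

lemma null_sets_Pow: "null_sets M \<subseteq> Pow (space M)"
  using null_setsD2 sets.sets_into_space by blast

lemma gen_sets_Pow: "gen_sets M Y \<subseteq> Pow (space M)"
  unfolding gen_sets_def by auto

lemma sets_F0: "sets (F0 M) = sigma_sets (space M) (null_sets M)"
  unfolding F0_def by (rule sets_measure_of) (use null_sets_Pow in auto)

lemma space_F0: "space (F0 M) = space M"
  unfolding F0_def by (simp add: space_measure_of_conv)

lemma sets_F1: "sets (F1 M X e1) = sigma_sets (space M) (null_sets M \<union> gen_sets M X \<union> gen_sets M e1)"
  unfolding F1_def by (rule sets_measure_of) (use null_sets_Pow[of M] gen_sets_Pow[of M] in blast)

lemma space_F1: "space (F1 M X e1) = space M"
  unfolding F1_def by (simp add: space_measure_of_conv)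

lemma sets_F0_sub: "sets (F0 M) \<subseteq> sets M"
  unfolding sets_F0 by (rule sets.sigma_sets_subset) auto

lemma sets_F1_sub: "X \<in> borel_measurable M \<Longrightarrow> e1 \<in> borel_measurable M \<Longrightarrow> sets (F1 M X e1) \<subseteq> sets M"
  unfolding sets_F1 by (rule sets.sigma_sets_subset) (use gen_sets_sub in auto)

lemma (in prob_space) indep_F0:
  assumes "Y \<in> borel_measurable M"
  shows "indep_set (sets (F0 M)) (sigma_sets (space M) (gen_sets M Y))"
  unfolding sets_F0
proof (rule indep_set_sigma_sets)
  show "indep_set (null_sets M) (gen_sets M Y)"
  proof (rule indep_setI)
    show "null_sets M \<subseteq> events" by auto
    show "gen_sets M Y \<subseteq> events" using gen_sets_sub[OF assms] .
    fix a b assume "a \<in> null_sets M" "b \<in> gen_sets M Y"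
    then have "a \<inter> b \<in> null_sets M" using gen_sets_sub[OF assms] by (meson in_mono null_set_Int2)
    then show "prob (a \<inter> b) = prob a * prob b" using \<open>a \<in> null_sets M\<close>
      by (simp add: measure_eq_0_null_sets)
  qed
  show "Int_stable (null_sets M)" unfolding Int_stable_def by auto
  show "Int_stable (gen_sets M Y)" by (rule gen_sets_Int_stable)
qed

lemma (in prob_space) indep_XE1_E2:
  assumes X: "X \<in> borel_measurable M" and e1: "e1 \<in> borel_measurable M" and e2: "e2 \<in> borel_measurable M"
    and ind: "indep_vars (\<lambda>_. borel) (\<lambda>i. if i = 0 then X else if i = 1 then e1 else e2) {0::nat, 1, 2}"
  shows "indep_set (sigma_sets (space M) (gen_sets M X \<union> gen_sets M e1)) (sigma_sets (space M) (gen_sets M e2))"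
proof -
  define Y where "Y = (\<lambda>i::nat. if i = 0 then X else if i = 1 then e1 else e2)"
  define I where "I = (\<lambda>b::bool. if b then {0::nat,1} else {2})"
  have eqE: "(\<lambda>i. {Y i -` A \<inter> space M | A. A \<in> sets borel}) = (\<lambda>i. gen_sets M (Y i))"
    unfolding gen_sets_def by simp
  have "indep_sets (\<lambda>i. gen_sets M (Y i)) {0,1,2}"
    using ind unfolding indep_vars_def2 Y_def[symmetric] eqE by simp
  moreover have "(\<Union>j. I j) = {0,1,2}" unfolding I_def by auto
  ultimately have "indep_sets (\<lambda>i. gen_sets M (Y i)) (\<Union>j\<in>UNIV. I j)" by simp
  then have "indep_sets (\<lambda>j. sigma_sets (space M) (\<Union>i\<in>I j. gen_sets M (Y i))) UNIV"
    by (rule indep_sets_collect_sigma)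
      (auto simp: gen_sets_Int_stable disjoint_family_on_def I_def)
  also have "(\<lambda>j. sigma_sets (space M) (\<Union>i\<in>I j. gen_sets M (Y i))) =
      case_bool (sigma_sets (space M) (gen_sets M X \<union> gen_sets M e1)) (sigma_sets (space M) (gen_sets M e2))"
    by (rule ext) (auto simp: I_def Y_def split: bool.split)
  finally show ?thesis unfolding indep_set_def .
qed

lemma (in prob_space) indep_F1:
  assumes X: "X \<in> borel_measurable M" and e1: "e1 \<in> borel_measurable M" and e2: "e2 \<in> borel_measurable M"
    and ind: "indep_vars (\<lambda>_. borel) (\<lambda>i. if i = 0 then X else if i = 1 then e1 else e2) {0::nat, 1, 2}"
    and A: "A \<in> sets (F1 M X e1)" and B: "B \<in> sigma_sets (space M) (gen_sets M e2)"
  shows "prob (A \<inter> B) = prob A * prob B"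
proof -
  define S where "S = sigma_sets (space M) (gen_sets M X \<union> gen_sets M e1)"
  define H where "H = {E \<in> sets M. \<exists>A\<in>S. (E - A) \<union> (A - E) \<in> null_sets M}"
  have indS: "indep_set S (gen_sets M e2)"
    using indep_XE1_E2[OF assms(1-4)] gen_sets_sub[OF e2] unfolding S_def indep_sets2_eq
    by (auto intro: sigma_sets.Basic)
  have Ssub: "S \<subseteq> sets M" unfolding S_def
    by (rule sets.sigma_sets_subset) (use gen_sets_sub X e1 in auto)
  have Hind: "indep_set H (gen_sets M e2)"
  proof (rule indep_setI)
    show "H \<subseteq> events" unfolding H_def by auto
    show "gen_sets M e2 \<subseteq> events" using gen_sets_sub[OF e2] .
    fix a b assume a: "a \<in> H" and b: "b \<in> gen_sets M e2"
    then obtain A' where A': "A' \<in> S" "(a - A') \<union> (A' - a) \<in> null_sets M" "a \<in> sets M"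
      unfolding H_def by auto
    have bM: "b \<in> sets M" using b gen_sets_sub[OF e2] by auto
    have AE1: "AE x in M. x \<in> a \<longleftrightarrow> x \<in> A'"
      using AE_not_in[OF A'(2)] by eventually_elim auto
    have "prob a = prob A'"
      using AE1 A'(3) A'(1) Ssub by (intro measure_eq_AE) auto
    moreover have "prob (a \<inter> b) = prob (A' \<inter> b)"
      using AE1 A'(3) A'(1) Ssub bM by (intro measure_eq_AE) auto
    moreover have "prob (A' \<inter> b) = prob A' * prob b"
      using indep_setD[OF indS A'(1) b] .
    ultimately show "prob (a \<inter> b) = prob a * prob b" by simp
  qed
  have HInt: "Int_stable H"
    unfolding Int_stable_def
  proof safe
    fix a b assume a: "a \<in> H" and b: "b \<in> H"
    then obtain A' B' where A': "A' \<in> S" "(a - A') \<union> (A' - a) \<in> null_sets M" "a \<in> sets M"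
      and B': "B' \<in> S" "(b - B') \<union> (B' - b) \<in> null_sets M" "b \<in> sets M"
      unfolding H_def by auto
    have "sigma_algebra (space M) S" unfolding S_def
      by (rule sigma_algebra_sigma_sets) (use gen_sets_Pow[of M] in blast)
    then have "A' \<inter> B' \<in> S" using A'(1) B'(1) by (meson sigma_algebra.sigma_sets_eq sigma_algebra_sigma_sets sigma_sets_Un sigma_sets_Inter semiring_of_sets.Int algebra.axioms ring_of_sets.axioms sigma_algebra.axioms)
    moreover have "((a \<inter> b) - (A' \<inter> B')) \<union> ((A' \<inter> B') - (a \<inter> b)) \<in> null_sets M"
    proof (rule null_sets_subset)
      show "((a - A') \<union> (A' - a)) \<union> ((b - B') \<union> (B' - b)) \<in> null_sets M"
        using A'(2) B'(2) by auto
      show "((a \<inter> b) - (A' \<inter> B')) \<union> ((A' \<inter> B') - (a \<inter> b)) \<in> sets M"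
        using A' B' Ssub by auto
    qed auto
    ultimately show "a \<inter> b \<in> H" using A'(3) B'(3) unfolding H_def by auto
  qed
  have F1H: "sets (F1 M X e1) \<subseteq> sigma_sets (space M) H"
    unfolding sets_F1
  proof (rule sigma_sets_subseteq, safe)
    fix N assume "N \<in> null_sets M"
    moreover have "{} \<in> S" unfolding S_def by (rule sigma_sets.Empty)
    ultimately show "N \<in> H" unfolding H_def by force
  next
    fix E assume "E \<in> gen_sets M X"
    then have "E \<in> S" "E \<in> sets M" unfolding S_def using gen_sets_sub[OF X] by auto
    then show "E \<in> H" unfolding H_def by force
  next
    fix E assume "E \<in> gen_sets M e1"
    then have "E \<in> S" "E \<in> sets M" unfolding S_def using gen_sets_sub[OF e1] by auto
    then show "E \<in> H" unfolding H_def by force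
  qed
  have "indep_set (sigma_sets (space M) H) (sigma_sets (space M) (gen_sets M e2))"
    using Hind HInt gen_sets_Int_stable by (rule indep_set_sigma_sets)
  then show ?thesis using A B F1H by (auto intro: indep_setD)
qed




lemma AE_mono': "AE x in M. P x \<Longrightarrow> (\<And>x. x \<in> space M \<Longrightarrow> P x \<Longrightarrow> Q x) \<Longrightarrow> AE x in M. Q x"
  by (erule AE_mp) auto

lemma affine_hull_two_real:
  fixes S :: "real set"
  assumes "a \<in> S" "b \<in> S" "a \<noteq> b"
  shows "affine hull S = UNIV"
proof -
  { fix x :: real
  have ha: "a \<in> affine hull S" "b \<in> affine hull S" using assms(1,2) by (auto intro: hull_inc)
  define u where "u = (x - b) / (a - b)"
  have "u *\<^sub>R a + (1 - u) *\<^sub>R b \<in> affine hull S"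
    by (rule mem_affine[OF affine_affine_hull ha]) simp
  moreover have "u *\<^sub>R a + (1 - u) *\<^sub>R b = x"
  proof -
    have "a - b \<noteq> 0" using assms(3) by simp
    then have "u * (a - b) = x - b" unfolding u_def by simp
    then have "u * a + (1 - u) * b = x" by (simp add: algebra_simps)
    then show ?thesis by simp
  qed
  ultimately have "x \<in> affine hull S" by simp }
  then show ?thesis by auto
qed

lemma D_inclI:
  assumes A: "\<And>\<kappa>'. is_rcd M G Z \<kappa>' \<Longrightarrow> AE \<omega> in M. a \<in> supp (\<kappa>' \<omega>)"
    and B: "\<And>\<kappa>'. is_rcd M G Z \<kappa>' \<Longrightarrow> AE \<omega> in M. b \<in> supp (\<kappa>' \<omega>)"
    and ab: "a \<noteq> b"
  shows "D_incl M G Y Z"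
  unfolding D_incl_def
proof (intro allI impI)
  fix \<kappa> \<kappa>' assume "is_rcd M G Y \<kappa>" and r: "is_rcd M G Z \<kappa>'"
  have "AE \<omega> in M. a \<in> supp (\<kappa>' \<omega>) \<and> b \<in> supp (\<kappa>' \<omega>)"
    using eventually_conj[OF A[OF r] B[OF r]] .
  then show "AE \<omega> in M. affine hull supp (\<kappa> \<omega>) \<subseteq> affine hull supp (\<kappa>' \<omega>)"
  proof (rule AE_mono')
    fix \<omega> assume "a \<in> supp (\<kappa>' \<omega>) \<and> b \<in> supp (\<kappa>' \<omega>)"
    then have "affine hull supp (\<kappa>' \<omega>) = UNIV" using affine_hull_two_real ab by blast
    then show "affine hull supp (\<kappa> \<omega>) \<subseteq> affine hull supp (\<kappa>' \<omega>)" by simp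
  qed
qed



lemma (in prob_space) rcd_supp:
  assumes G: "sets G \<subseteq> sets M" "space G = space M"
    and indep: "\<And>A. A \<in> sets G \<Longrightarrow> prob (A \<inter> {\<omega>\<in>space M. Y \<omega> = v}) = prob A * prob {\<omega>\<in>space M. Y \<omega> = v}"
    and pos: "prob {\<omega>\<in>space M. Y \<omega> = v} \<noteq> 0"
    and rcd: "is_rcd M G Y \<kappa>"
  shows "AE \<omega> in M. v \<in> supp (\<kappa> \<omega>)"
proof -
  define f where "f = (\<lambda>\<omega>. measure (\<kappa> \<omega>) {v})"
  have vB: "{v} \<in> sets borel" by simp
  have r2: "\<forall>B\<in>sets borel. (\<lambda>\<omega>. measure (\<kappa> \<omega>) B) \<in> borel_measurable G \<and>
        (\<forall>A\<in>sets G. (LINT \<omega>:A|M. measure (\<kappa> \<omega>) B) = measure M (A \<inter> {\<omega>\<in>space M. Y \<omega> \<in> B}))"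
    using rcd unfolding is_rcd_def by (rule conjunct2)
  have fm: "f \<in> borel_measurable G" using bspec[OF r2 vB] unfolding f_def by (rule conjunct1)
  have fint: "\<And>A. A \<in> sets G \<Longrightarrow> (LINT \<omega>:A|M. f \<omega>) = measure M (A \<inter> {\<omega>\<in>space M. Y \<omega> \<in> {v}})"
    using bspec[OF r2 vB] unfolding f_def by simp
  define A where "A = f -` {0} \<inter> space G"
  have AG: "A \<in> sets G" unfolding A_def using fm by (rule measurable_sets) simp
  have AM: "A \<in> sets M" using AG G by auto
  have "(LINT \<omega>:A|M. f \<omega>) = 0"
  proof -
    have "(\<lambda>\<omega>. indicator A \<omega> *\<^sub>R f \<omega>) = (\<lambda>_. 0)" unfolding A_def indicator_def by (rule ext) simp
    then show ?thesis unfolding set_lebesgue_integral_def by simp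
  qed
  then have "prob (A \<inter> {\<omega>\<in>space M. Y \<omega> = v}) = 0" using fint[OF AG] by simp
  then have "prob A = 0" using indep[OF AG] pos by simp
  then have "emeasure M A = 0" by (simp add: emeasure_eq_measure)
  then have "A \<in> null_sets M" using AM by (rule null_setsI)
  then have "AE \<omega> in M. \<omega> \<notin> A" by (rule AE_not_in)
  then show ?thesis
  proof (rule AE_mono')
    fix \<omega> assume w: "\<omega> \<in> space M" and nA: "\<omega> \<notin> A"
    have "f \<omega> \<noteq> 0" using w nA G unfolding A_def by auto
    then have e0: "emeasure (\<kappa> \<omega>) {v} \<noteq> 0" unfolding f_def measure_def by auto
    have sk: "sets (\<kappa> \<omega>) = sets borel" using conjunct1[OF rcd[unfolded is_rcd_def]] w by simp
    show "v \<in> supp (\<kappa> \<omega>)" unfolding supp_def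
    proof (safe)
      fix e :: real assume "e > 0"
      then have "{v} \<subseteq> ball v e" by auto
      moreover have "ball v e \<in> sets (\<kappa> \<omega>)" using sk by simp
      ultimately have "emeasure (\<kappa> \<omega>) {v} \<le> emeasure (\<kappa> \<omega>) (ball v e)"
        by (rule emeasure_mono)
      then show "emeasure (\<kappa> \<omega>) (ball v e) > 0" using e0
        by (meson e0 order.strict_trans2 not_gr_zero)
    qed
  qed
qed



lemma AE_null_emeasure:
  assumes "AE x in M. P x" "N \<in> sets M" "\<And>x. x \<in> N \<Longrightarrow> \<not> P x"
  shows "emeasure M N = 0"
proof -
  have "AE x in M. x \<notin> N" using assms(1) by (rule AE_mono') (use assms(3) in blast)
  then have "N \<in> null_sets M" using AE_iff_null_sets[OF assms(2)] by simp
  then show ?thesis by (rule null_setsD1)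
qed

lemma AE_null_measure:
  assumes "AE x in M. P x" "N \<in> sets M" "\<And>x. x \<in> N \<Longrightarrow> \<not> P x"
  shows "measure M N = 0"
  using AE_null_emeasure[OF assms] by (simp add: measure_def)

lemma AE_pos_ex:
  assumes "AE x in M. P x" "{x\<in>space M. Q x} \<in> sets M" "measure M {x\<in>space M. Q x} \<noteq> 0"
  shows "\<exists>x\<in>space M. P x \<and> Q x"
proof (rule ccontr)
  assume "\<not> ?thesis"
  then have "measure M {x\<in>space M. Q x} = 0"
    using assms(1,2) by (intro AE_null_measure[where P=P]) auto
  then show False using assms(3) by simp
qed

lemma gauss_c:
  fixes c :: real
  assumes D: "distributed M lborel X std_normal_density" and AE: "AE \<omega> in M. 0 \<le> 1 + c * X \<omega>"
  shows "c \<le> 0"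
proof (rule ccontr)
  assume "\<not> c \<le> 0" then have c: "c > 0" by simp
  have Xm: "X \<in> measurable M lborel" using D by (rule distributed_measurable)
  have AEd: "AE x in distr M lborel X. 0 \<le> 1 + c * x"
    using AE by (subst AE_distr_iff[OF Xm]) auto
  have eq: "distr M lborel X = density lborel (\<lambda>x. ennreal (std_normal_density x))"
    using D by (rule distributed_distr_eq_density)
  have "AE x in density lborel (\<lambda>x. ennreal (std_normal_density x)). 0 \<le> 1 + c * x"
    using AEd unfolding eq .
  then have "AE x in lborel. 0 < ennreal (std_normal_density x) \<longrightarrow> 0 \<le> 1 + c * x"
    by (subst (asm) AE_density) auto
  then have "AE x in lborel. 0 \<le> 1 + c * x"
    by (rule AE_mono') (use normal_density_pos[of 1] in auto)
  then have "emeasure lborel {-2/c <..< -1/c} = 0"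
  proof (rule AE_null_emeasure)
    show "{-2/c <..< -1/c} \<in> sets lborel" by simp
    fix x assume "x \<in> {-2/c <..< -1/c}"
    then have "x < -1/c" by simp
    then have "c * x < c * (-1/c)" using c by (intro mult_strict_left_mono) auto
    then show "\<not> 0 \<le> 1 + c * x" using c by simp
  qed
  moreover have "-2/c \<le> -1/c" using c by (simp add: divide_le_cancel)
  ultimately have "ennreal (-1/c - -2/c) = 0" by simp
  moreover have "-1/c - -2/c = 1/c" by (simp add: field_simps)
  ultimately show False using c by simp
qed

lemma eexp_le1:
  assumes "prob_space M" "\<And>\<omega>. \<omega> \<in> space M \<Longrightarrow> f \<omega> \<le> 1"
  shows "eexp M f \<le> 1"
proof -
  interpret prob_space M by fact
  have "(\<integral>\<^sup>+\<omega>. e2ennreal (f \<omega>) \<partial>M) \<le> (\<integral>\<^sup>+\<omega>. 1 \<partial>M)"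
  proof (rule nn_integral_mono)
    fix \<omega> assume "\<omega> \<in> space M"
    then have "e2ennreal (f \<omega>) \<le> e2ennreal 1" using assms(2) by (intro e2ennreal_mono) auto
    moreover have "e2ennreal (1::ereal) = 1" by (metis e2ennreal_enn2ereal one_ennreal.rep_eq)
    ultimately show "e2ennreal (f \<omega>) \<le> 1" by simp
  qed
  also have "\<dots> = 1" by (simp add: emeasure_space_1)
  finally have a: "enn2ereal (\<integral>\<^sup>+\<omega>. e2ennreal (f \<omega>) \<partial>M) \<le> 1"
    by (metis less_eq_ennreal.rep_eq one_ennreal.rep_eq)
  have b: "0 \<le> enn2ereal (\<integral>\<^sup>+\<omega>. e2ennreal (- f \<omega>) \<partial>M)" by simp
  show ?thesis unfolding eexp_def using a b
    by (meson ereal_diff_le_self order_trans)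
qed

lemma eexp_ge:
  assumes "AE \<omega> in M. 0 \<le> f \<omega>" "ennreal a \<le> (\<integral>\<^sup>+\<omega>. e2ennreal (f \<omega>) \<partial>M)" "0 \<le> a"
  shows "ereal a \<le> eexp M f"
proof -
  have "(\<integral>\<^sup>+\<omega>. e2ennreal (- f \<omega>) \<partial>M) = (\<integral>\<^sup>+\<omega>. 0 \<partial>M)"
    by (rule nn_integral_cong_AE) (rule AE_mono'[OF assms(1)], simp add: e2ennreal_neg)
  then have z: "(\<integral>\<^sup>+\<omega>. e2ennreal (- f \<omega>) \<partial>M) = 0" by simp
  have "enn2ereal (ennreal a) \<le> enn2ereal (\<integral>\<^sup>+\<omega>. e2ennreal (f \<omega>) \<partial>M)"
    using assms(2) by (simp add: less_eq_ennreal.rep_eq[symmetric])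
  then show ?thesis unfolding eexp_def z using assms(3) by (simp add: enn2ereal_ennreal zero_ennreal.rep_eq)
qed



lemma wealth2: "wealth dS w phi 2 \<omega> = w + fst phi * dS 1 \<omega> + snd phi \<omega> * dS 2 \<omega>"
proof -
  have "{1..2::nat} = {1,2}" by auto
  then show ?thesis unfolding wealth_def strat_at_def by simp
qed

lemma wealth1: "wealth dS w phi 1 \<omega> = w + fst phi * dS 1 \<omega>"
  unfolding wealth_def strat_at_def by simp

lemma wealth0: "wealth dS w phi 0 \<omega> = w"
  unfolding wealth_def by simp

lemma (in prob_space) NA_lemma:
  assumes G: "sets G \<subseteq> sets M" "space G = space M"
    and e1G: "e1 \<in> borel_measurable G" and e1M: "e1 \<in> borel_measurable M" and e2M: "e2 \<in> borel_measurable M"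
    and ind: "\<And>A v. A \<in> sets G \<Longrightarrow> prob (A \<inter> {\<omega>\<in>space M. e2 \<omega> = v}) = prob A * prob {\<omega>\<in>space M. e2 \<omega> = v}"
    and p1: "prob {\<omega>\<in>space M. e1 \<omega> = -1/2} = 1/2" "prob {\<omega>\<in>space M. e1 \<omega> = 4} = 1/2"
    and p2: "prob {\<omega>\<in>space M. e2 \<omega> = -1/2} = 1/2" "prob {\<omega>\<in>space M. e2 \<omega> = 1/2} = 1/2"
    and S: "dS = (\<lambda>t. if t = 1 then e1 else if t = 2 then e2 else (\<lambda>_. 0))"
  shows "NA M G dS"
  unfolding NA_def
proof (intro allI impI)
  fix phi :: "real \<times> ('a \<Rightarrow> real)"
  assume strat: "is_strategy G phi" and AEW: "AE \<omega> in M. 0 \<le> wealth dS 0 phi 2 \<omega>"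
  obtain c p where phi: "phi = (c, p)" by (cases phi)
  have pG: "p \<in> borel_measurable G" using strat unfolding is_strategy_def phi by simp
  have W: "\<And>\<omega>. wealth dS 0 phi 2 \<omega> = c * e1 \<omega> + p \<omega> * e2 \<omega>"
    unfolding wealth2 phi S by simp
  have AEW': "AE \<omega> in M. 0 \<le> c * e1 \<omega> + p \<omega> * e2 \<omega>" using AEW unfolding W .
  note [measurable] = e1G pG
  define E1 where "E1 = {\<omega>\<in>space G. c * e1 \<omega> - p \<omega> / 2 < 0 \<and> 0 \<le> p \<omega>}"
  define E2 where "E2 = {\<omega>\<in>space G. c * e1 \<omega> + p \<omega> / 2 < 0 \<and> p \<omega> < 0}"
  have E1G: "E1 \<in> sets G" unfolding E1_def by measurable
  have E2G: "E2 \<in> sets G" unfolding E2_def by measurable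
  have e2s: "\<And>v. {\<omega>\<in>space M. e2 \<omega> = v} \<in> sets M" using e2M by measurable
  have "prob (E1 \<inter> {\<omega>\<in>space M. e2 \<omega> = -1/2}) = 0"
  proof (rule AE_null_measure[OF AEW'])
    show "E1 \<inter> {\<omega>\<in>space M. e2 \<omega> = -1/2} \<in> sets M" using E1G G e2s by blast
    fix x assume "x \<in> E1 \<inter> {\<omega>\<in>space M. e2 \<omega> = -1/2}"
    then have "c * e1 x - p x / 2 < 0" "e2 x = -1/2" unfolding E1_def by auto
    then show "\<not> 0 \<le> c * e1 x + p x * e2 x" by simp
  qed
  then have E10: "prob E1 = 0" using ind[OF E1G, of "-1/2"] p2 by simp
  have "prob (E2 \<inter> {\<omega>\<in>space M. e2 \<omega> = 1/2}) = 0"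
  proof (rule AE_null_measure[OF AEW'])
    show "E2 \<inter> {\<omega>\<in>space M. e2 \<omega> = 1/2} \<in> sets M" using E2G G e2s by blast
    fix x assume "x \<in> E2 \<inter> {\<omega>\<in>space M. e2 \<omega> = 1/2}"
    then have h: "c * e1 x + p x / 2 < 0" "e2 x = 1/2" unfolding E2_def by auto
    then have "p x * e2 x = p x / 2" by simp
    then show "\<not> 0 \<le> c * e1 x + p x * e2 x" using h(1) by linarith
  qed
  then have E20: "prob E2 = 0" using ind[OF E2G, of "1/2"] p2 by simp
  have n1: "E1 \<in> null_sets M" using E10 E1G G by (auto simp: emeasure_eq_measure intro!: null_setsI)
  have n2: "E2 \<in> null_sets M" using E20 E2G G by (auto simp: emeasure_eq_measure intro!: null_setsI)
  have "AE \<omega> in M. \<omega> \<notin> E1 \<and> \<omega> \<notin> E2" using AE_not_in[OF n1] AE_not_in[OF n2] by (rule AE_conjI)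
  then have AEc: "AE \<omega> in M. \<bar>p \<omega>\<bar> / 2 \<le> c * e1 \<omega>"
  proof (rule AE_mono')
    fix x assume x: "x \<in> space M" and "x \<notin> E1 \<and> x \<notin> E2"
    then have "\<not> (c * e1 x - p x / 2 < 0 \<and> 0 \<le> p x)" "\<not> (c * e1 x + p x / 2 < 0 \<and> p x < 0)"
      unfolding E1_def E2_def using G by auto
    then show "\<bar>p x\<bar> / 2 \<le> c * e1 x" by (cases "0 \<le> p x") (simp_all add: not_le)
  qed
  have "\<exists>\<omega>\<in>space M. \<bar>p \<omega>\<bar> / 2 \<le> c * e1 \<omega> \<and> e1 \<omega> = -1/2"
  proof (rule AE_pos_ex[OF AEc])
    show "{\<omega>\<in>space M. e1 \<omega> = -1/2} \<in> sets M" using e1M by measurable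
    show "prob {\<omega>\<in>space M. e1 \<omega> = -1/2} \<noteq> 0" using p1 by simp
  qed
  then obtain w where w: "\<bar>p w\<bar> / 2 \<le> c * e1 w" "e1 w = -1/2" by blast
  then have "c * e1 w = - c / 2" by simp
  then have c1: "c \<le> 0" using w(1) abs_ge_zero[of "p w"] by linarith
  have "\<exists>\<omega>\<in>space M. \<bar>p \<omega>\<bar> / 2 \<le> c * e1 \<omega> \<and> e1 \<omega> = 4"
  proof (rule AE_pos_ex[OF AEc])
    show "{\<omega>\<in>space M. e1 \<omega> = 4} \<in> sets M" using e1M by measurable
    show "prob {\<omega>\<in>space M. e1 \<omega> = 4} \<noteq> 0" using p1 by simp
  qed
  then obtain w' where w': "\<bar>p w'\<bar> / 2 \<le> c * e1 w'" "e1 w' = 4" by blast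
  then have "c * e1 w' = 4 * c" by simp
  then have c2: "0 \<le> c" using w'(1) abs_ge_zero[of "p w'"] by linarith
  have c0: "c = 0" using c1 c2 by simp
  show "AE \<omega> in M. wealth dS 0 phi 2 \<omega> = 0"
    using AEc by (rule AE_mono') (simp add: W c0)
qed



lemma gen_sets_eq_in: "{\<omega>\<in>space M. Y \<omega> = v} \<in> gen_sets M Y"
  unfolding gen_sets_def by (rule CollectI, rule exI[of _ "{v}"]) auto

lemma F1_meas: "e1 \<in> borel_measurable (F1 M X e1)"
proof (rule measurableI)
  fix A :: "real set" assume "A \<in> sets borel"
  then have "e1 -` A \<inter> space M \<in> gen_sets M e1" unfolding gen_sets_def by blast
  then show "e1 -` A \<inter> space (F1 M X e1) \<in> sets (F1 M X e1)"
    unfolding space_F1 sets_F1 by (blast intro: sigma_sets.Basic)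
qed simp

lemma gen_in_F1: "gen_sets M e1 \<subseteq> sets (F1 M X e1)"
  unfolding sets_F1 by (blast intro: sigma_sets.Basic)

lemma U_le1: assumes "c \<le> 0" shows "U (1 + c * 3) \<le> 1"
proof (cases "0 \<le> 1 + c * 3")
  case True
  then have "sqrt (1 + c * 3) \<le> 1" using assms by simp
  then have "min (sqrt (1 + c * 3)) 2 \<le> 1" by linarith
  then show ?thesis using True unfolding U_def by (simp only: if_True ereal_less_eq(3) one_ereal_def)
next
  case False then show ?thesis unfolding U_def by simp
qed

lemma U_vals: "U 4 = 2" "U (9/2) = 2" "U (11/2) = 2" "U 1 = 1"
proof -
  have s4: "sqrt 4 = 2" by simp
  have "2 \<le> sqrt (9/2)" by (rule real_le_rsqrt) simp
  moreover have "2 \<le> sqrt (11/2)" by (rule real_le_rsqrt) simp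
  ultimately show "U 4 = 2" "U (9/2) = 2" "U (11/2) = 2" "U 1 = 1"
    unfolding U_def using s4 by (auto simp: min_def)
qed

lemma e2_two: "e2ennreal (2::ereal) = 2"
  by (metis e2ennreal_enn2ereal enn2ereal_numeral)
lemma e2_one: "e2ennreal (1::ereal) = 1"
  by (metis e2ennreal_enn2ereal one_ennreal.rep_eq)



lemma part2:
  fixes M :: "'a measure" and X e1 e2 :: "'a \<Rightarrow> real"
    and dSstar dStil dSbar :: "nat \<Rightarrow> 'a \<Rightarrow> real" and G :: "'a measure"
  assumes "prob_space M"
    and D: "distributed M lborel X std_normal_density"
    and "dStil = (\<lambda>t. if t = 1 then X else if t = 2 then (\<lambda>\<omega>. 3 - X \<omega>) else (\<lambda>_. 0))"
    and "dSbar = (\<lambda>t. if t = 1 then (\<lambda>_. 3) else (\<lambda>_. 0))"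
  shows "robust_value M {dSstar, dStil, dSbar} 1 (adm M G {dSstar, dStil, dSbar} 1) \<le> 1"
  unfolding robust_value_def
proof (rule SUP_least)
  fix phi assume "phi \<in> adm M G {dSstar, dStil, dSbar} 1"
  then have "AE \<omega> in M. 0 \<le> wealth dStil 1 phi 1 \<omega>" unfolding adm_def by auto
  then have "AE \<omega> in M. 0 \<le> 1 + fst phi * X \<omega>" unfolding wealth1 assms(3) by simp
  then have c: "fst phi \<le> 0" using D by (intro gauss_c) auto
  show "(INF dS\<in>{dSstar, dStil, dSbar}. eexp M (\<lambda>\<omega>. U (wealth dS 1 phi 2 \<omega>))) \<le> 1"
  proof (rule INF_lower2[of dSbar])
    show "eexp M (\<lambda>\<omega>. U (wealth dSbar 1 phi 2 \<omega>)) \<le> 1"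
    proof (rule eexp_le1[OF assms(1)])
      fix \<omega> show "U (wealth dSbar 1 phi 2 \<omega>) \<le> 1"
        unfolding wealth2 assms(4) using U_le1[OF c] by (simp add: mult.commute)
    qed
  qed simp
qed



lemma part3:
  fixes M :: "'a measure" and X e1 e2 :: "'a \<Rightarrow> real"
    and dSstar dStil dSbar :: "nat \<Rightarrow> 'a \<Rightarrow> real"
  assumes P: "prob_space M"
    and D: "distributed M lborel X std_normal_density"
    and e1M: "e1 \<in> borel_measurable M" and e2M: "e2 \<in> borel_measurable M"
    and ind2: "\<And>A v. A \<in> sets (F1 M X e1) \<Longrightarrow> measure M (A \<inter> {\<omega>\<in>space M. e2 \<omega> = v}) = measure M A * measure M {\<omega>\<in>space M. e2 \<omega> = v}"
    and p1: "measure M {\<omega>\<in>space M. e1 \<omega> = -1/2} = 1/2" "measure M {\<omega>\<in>space M. e1 \<omega> = 4} = 1/2"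
    and p2: "measure M {\<omega>\<in>space M. e2 \<omega> = -1/2} = 1/2" "measure M {\<omega>\<in>space M. e2 \<omega> = 1/2} = 1/2"
    and Sst: "dSstar = (\<lambda>t. if t = 1 then e1 else if t = 2 then e2 else (\<lambda>_. 0))"
    and Sti: "dStil = (\<lambda>t. if t = 1 then X else if t = 2 then (\<lambda>\<omega>. 3 - X \<omega>) else (\<lambda>_. 0))"
    and Sba: "dSbar = (\<lambda>t. if t = 1 then (\<lambda>_. 3) else (\<lambda>_. 0))"
  shows "1 < robust_value M {dSstar, dStil, dSbar} 1 (adm_tilde M (F1 M X e1) {dSstar, dStil, dSbar} 1)"
proof -
  interpret prob_space M by (rule P)
  define phi0 :: "real \<times> ('a \<Rightarrow> real)" where "phi0 = (1, \<lambda>_. 1)"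
  have ev1: "\<And>v. {\<omega>\<in>space M. e1 \<omega> = v} \<in> sets M" using e1M by measurable
  have ev2: "\<And>v. {\<omega>\<in>space M. e2 \<omega> = v} \<in> sets M" using e2M by measurable
  have "prob ({\<omega>\<in>space M. e1 \<omega> = -1/2} \<union> {\<omega>\<in>space M. e1 \<omega> = 4}) = 1"
  proof -
    have dj: "{\<omega>\<in>space M. e1 \<omega> = -1/2} \<inter> {\<omega>\<in>space M. e1 \<omega> = 4} = {}" by auto
    show ?thesis using finite_measure_Union[OF ev1 ev1 dj] p1 by linarith
  qed
  then have AE1: "AE \<omega> in M. e1 \<omega> = -1/2 \<or> e1 \<omega> = 4" by (rule AE_mono'[OF AE_prob_1]) auto
  have "prob ({\<omega>\<in>space M. e2 \<omega> = -1/2} \<union> {\<omega>\<in>space M. e2 \<omega> = 1/2}) = 1"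
  proof -
    have dj: "{\<omega>\<in>space M. e2 \<omega> = -1/2} \<inter> {\<omega>\<in>space M. e2 \<omega> = 1/2} = {}" by auto
    show ?thesis using finite_measure_Union[OF ev2 ev2 dj] p2 by linarith
  qed
  then have AE2: "AE \<omega> in M. e2 \<omega> = -1/2 \<or> e2 \<omega> = 1/2" by (rule AE_mono'[OF AE_prob_1]) auto
  have W0: "AE \<omega> in M. 0 \<le> wealth dSstar 1 phi0 2 \<omega>"
    using AE_conjI[OF AE1 AE2] by (rule AE_mono') (auto simp: wealth2 Sst phi0_def)
  have Wti: "\<And>\<omega>. wealth dStil 1 phi0 2 \<omega> = 4" by (simp add: wealth2 Sti phi0_def)
  have Wba: "\<And>\<omega>. wealth dSbar 1 phi0 2 \<omega> = 4" by (simp add: wealth2 Sba phi0_def)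
  have adm: "phi0 \<in> adm_tilde M (F1 M X e1) {dSstar, dStil, dSbar} 1"
    unfolding adm_tilde_def is_strategy_def using W0 Wti Wba by (auto simp: phi0_def)
  have e54: "ennreal (5/4) \<le> 2"
  proof -
    have "ennreal (5/4) \<le> ennreal 2" by (rule ennreal_leI) simp
    then show ?thesis by simp
  qed
  have const2: "ereal (5/4) \<le> eexp M (\<lambda>\<omega>. U (4::real))"
    by (rule eexp_ge) (auto simp: U_vals e2_two emeasure_space_1 e54)
  define S1 where "S1 = {\<omega>\<in>space M. e1 \<omega> = 4} \<inter> {\<omega>\<in>space M. e2 \<omega> = -1/2}"
  define S2 where "S2 = {\<omega>\<in>space M. e1 \<omega> = 4} \<inter> {\<omega>\<in>space M. e2 \<omega> = 1/2}"
  define S3 where "S3 = {\<omega>\<in>space M. e1 \<omega> = -1/2} \<inter> {\<omega>\<in>space M. e2 \<omega> = 1/2}"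
  have inF1: "\<And>v. {\<omega>\<in>space M. e1 \<omega> = v} \<in> sets (F1 M X e1)"
    using gen_in_F1 gen_sets_eq_in by blast
  have pS1: "prob S1 = 1/4" unfolding S1_def ind2[OF inF1] p1 p2 by simp
  have pS2: "prob S2 = 1/4" unfolding S2_def ind2[OF inF1] p1 p2 by simp
  have pS3: "prob S3 = 1/4" unfolding S3_def ind2[OF inF1] p1 p2 by simp
  have sS: "S1 \<in> sets M" "S2 \<in> sets M" "S3 \<in> sets M" unfolding S1_def S2_def S3_def using ev1 ev2 by (blast intro: sets.Int)+
  have Wst: "\<And>\<omega>. wealth dSstar 1 phi0 2 \<omega> = 1 + e1 \<omega> + e2 \<omega>" by (simp add: wealth2 Sst phi0_def)
  have lowb: "\<And>\<omega>. 2 * indicator S1 \<omega> + 2 * indicator S2 \<omega> + 1 * indicator S3 \<omega>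
      \<le> e2ennreal (U (wealth dSstar 1 phi0 2 \<omega>))"
  proof -
    fix \<omega>
    consider "\<omega> \<in> S1" | "\<omega> \<in> S2" | "\<omega> \<in> S3" | "\<omega> \<notin> S1 \<and> \<omega> \<notin> S2 \<and> \<omega> \<notin> S3" by blast
    then show "2 * indicator S1 \<omega> + 2 * indicator S2 \<omega> + 1 * indicator S3 \<omega>
      \<le> e2ennreal (U (wealth dSstar 1 phi0 2 \<omega>))"
    proof cases
      case 1
      then have "\<omega> \<notin> S2" "\<omega> \<notin> S3" "wealth dSstar 1 phi0 2 \<omega> = 9/2"
        unfolding S1_def S2_def S3_def Wst by auto
      note h = this
      show ?thesis unfolding h(3) using h(1,2) 1 by (simp add: U_vals e2_two)
    next
      case 2
      then have "\<omega> \<notin> S1" "\<omega> \<notin> S3" "wealth dSstar 1 phi0 2 \<omega> = 11/2"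
        unfolding S1_def S2_def S3_def Wst by auto
      note h = this
      show ?thesis unfolding h(3) using h(1,2) 2 by (simp add: U_vals e2_two)
    next
      case 3
      then have "\<omega> \<notin> S1" "\<omega> \<notin> S2" "wealth dSstar 1 phi0 2 \<omega> = 1"
        unfolding S1_def S2_def S3_def Wst by auto
      note h = this
      show ?thesis unfolding h(3) using h(1,2) 3 by (simp add: U_vals e2_one)
    next
      case 4 then show ?thesis by simp
    qed
  qed
  have "(\<integral>\<^sup>+\<omega>. 2 * indicator S1 \<omega> + 2 * indicator S2 \<omega> + 1 * indicator S3 \<omega> \<partial>M)
      = (\<integral>\<^sup>+\<omega>. 2 * indicator S1 \<omega> \<partial>M) + (\<integral>\<^sup>+\<omega>. 2 * indicator S2 \<omega> \<partial>M) + (\<integral>\<^sup>+\<omega>. 1 * indicator S3 \<omega> \<partial>M)"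
    using sS by (simp add: nn_integral_add)
  also have "\<dots> = 2 * ennreal (1/4) + 2 * ennreal (1/4) + 1 * ennreal (1/4)"
    using sS by (simp add: nn_integral_cmult_indicator emeasure_eq_measure del: ennreal_plus, simp only: pS1 pS2 pS3)
  also have "\<dots> = ennreal (5/4)"
  proof -
    have a: "2 * ennreal (1/4) = ennreal (1/2)"
      using ennreal_mult[of 2 "1/4"] by simp
    have b: "ennreal (1/2) + ennreal (1/2) + ennreal (1/4) = ennreal (5/4)"
      using ennreal_plus[of "1/2" "1/2"] ennreal_plus[of "1" "1/4"] by simp
    show ?thesis unfolding a mult_1 b ..
  qed
  finally have int_eq: "(\<integral>\<^sup>+\<omega>. 2 * indicator S1 \<omega> + 2 * indicator S2 \<omega> + 1 * indicator S3 \<omega> \<partial>M) = ennreal (5/4)" .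
  have star: "ereal (5/4) \<le> eexp M (\<lambda>\<omega>. U (wealth dSstar 1 phi0 2 \<omega>))"
  proof (rule eexp_ge)
    show "AE \<omega> in M. 0 \<le> U (wealth dSstar 1 phi0 2 \<omega>)"
      using W0 by (rule AE_mono') (simp add: U_def)
    show "ennreal (5/4) \<le> (\<integral>\<^sup>+\<omega>. e2ennreal (U (wealth dSstar 1 phi0 2 \<omega>)) \<partial>M)"
      unfolding int_eq[symmetric] by (rule nn_integral_mono) (rule lowb)
  qed simp
  have "ereal (5/4) \<le> (INF dS\<in>{dSstar, dStil, dSbar}. eexp M (\<lambda>\<omega>. U (wealth dS 1 phi0 2 \<omega>)))"
    using star const2 by (auto simp: Wti Wba intro!: INF_greatest)
  also have "\<dots> \<le> robust_value M {dSstar, dStil, dSbar} 1 (adm_tilde M (F1 M X e1) {dSstar, dStil, dSbar} 1)"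
    unfolding robust_value_def by (rule SUP_upper[OF adm])
  finally show ?thesis by (rule less_le_trans[rotated]) simp
qed



theorem mainTheorem8:
  fixes M :: "'a measure" and X e1 e2 :: "'a \<Rightarrow> real"
    and dSstar dStil dSbar :: "nat \<Rightarrow> 'a \<Rightarrow> real"
  assumes "prob_space M"
    and "distributed M lborel X std_normal_density"
    and "e1 \<in> borel_measurable M" and "e2 \<in> borel_measurable M"
    and "prob_space.indep_vars M (\<lambda>_. borel) (\<lambda>i. if i = 0 then X else if i = 1 then e1 else e2) {0::nat, 1, 2}"
    and "measure M {\<omega>\<in>space M. e1 \<omega> = -1/2} = 1/2" and "measure M {\<omega>\<in>space M. e1 \<omega> = 4} = 1/2"
    and "measure M {\<omega>\<in>space M. e2 \<omega> = -1/2} = 1/2" and "measure M {\<omega>\<in>space M. e2 \<omega> = 1/2} = 1/2"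
    and "dSstar = (\<lambda>t. if t = 1 then e1 else if t = 2 then e2 else (\<lambda>_. 0))"
    and "dStil = (\<lambda>t. if t = 1 then X else if t = 2 then (\<lambda>\<omega>. 3 - X \<omega>) else (\<lambda>_. 0))"
    and "dSbar = (\<lambda>t. if t = 1 then (\<lambda>_. 3) else (\<lambda>_. 0))"
  shows "dSstar \<in> Sstar_set M X e1 {dSstar, dStil, dSbar}
    \<and> robust_value M {dSstar, dStil, dSbar} 1 (adm M (F1 M X e1) {dSstar, dStil, dSbar} 1) \<le> 1
    \<and> 1 < robust_value M {dSstar, dStil, dSbar} 1 (adm_tilde M (F1 M X e1) {dSstar, dStil, dSbar} 1)"
proof -
  interpret prob_space M by fact
  have Xm: "X \<in> borel_measurable M"
    using distributed_measurable[OF assms(2)] by simp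
  have ind2: "\<And>A v. A \<in> sets (F1 M X e1) \<Longrightarrow> prob (A \<inter> {\<omega>\<in>space M. e2 \<omega> = v}) = prob A * prob {\<omega>\<in>space M. e2 \<omega> = v}"
    by (rule indep_F1[OF Xm assms(3,4,5)]) (auto intro: sigma_sets.Basic gen_sets_eq_in)
  have ind1: "\<And>A v. A \<in> sets (F0 M) \<Longrightarrow> prob (A \<inter> {\<omega>\<in>space M. e1 \<omega> = v}) = prob A * prob {\<omega>\<in>space M. e1 \<omega> = v}"
    by (rule indep_setD[OF indep_F0[OF assms(3)]]) (auto intro: sigma_sets.Basic gen_sets_eq_in)
  have G1: "sets (F1 M X e1) \<subseteq> sets M" "space (F1 M X e1) = space M"
    using sets_F1_sub[OF Xm assms(3)] space_F1[of M X e1] by auto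
  have G0: "sets (F0 M) \<subseteq> sets M" "space (F0 M) = space M"
    using sets_F0_sub[of M] space_F0[of M] by auto
  have NA: "NA M (F1 M X e1) dSstar"
    by (rule NA_lemma[OF G1 F1_meas assms(3,4) ind2 assms(6-10)])
  have pe1: "prob {\<omega>\<in>space M. e1 \<omega> = -1/2} \<noteq> 0" using assms(6) by linarith
  have pe1': "prob {\<omega>\<in>space M. e1 \<omega> = 4} \<noteq> 0" using assms(7) by linarith
  have pe2: "prob {\<omega>\<in>space M. e2 \<omega> = -1/2} \<noteq> 0" using assms(8) by linarith
  have pe2': "prob {\<omega>\<in>space M. e2 \<omega> = 1/2} \<noteq> 0" using assms(9) by linarith
  have D1: "D_incl M (F0 M) Y e1" for Y
  proof (rule D_inclI[where a="-1/2" and b=4])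
    fix \<kappa>' assume r: "is_rcd M (F0 M) e1 \<kappa>'"
    show "AE \<omega> in M. -1/2 \<in> supp (\<kappa>' \<omega>)"
      by (rule rcd_supp[OF G0 ind1 pe1 r])
  next
    fix \<kappa>' assume r: "is_rcd M (F0 M) e1 \<kappa>'"
    show "AE \<omega> in M. 4 \<in> supp (\<kappa>' \<omega>)"
      by (rule rcd_supp[OF G0 ind1 pe1' r])
  qed simp
  have D2: "D_incl M (F1 M X e1) Y e2" for Y
  proof (rule D_inclI[where a="-1/2" and b="1/2"])
    fix \<kappa>' assume r: "is_rcd M (F1 M X e1) e2 \<kappa>'"
    show "AE \<omega> in M. -1/2 \<in> supp (\<kappa>' \<omega>)"
      by (rule rcd_supp[OF G1 ind2 pe2 r])
  next
    fix \<kappa>' assume r: "is_rcd M (F1 M X e1) e2 \<kappa>'"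
    show "AE \<omega> in M. 1/2 \<in> supp (\<kappa>' \<omega>)"
      by (rule rcd_supp[OF G1 ind2 pe2' r])
  qed simp
  have part1: "dSstar \<in> Sstar_set M X e1 {dSstar, dStil, dSbar}"
    unfolding Sstar_set_def
  proof (intro CollectI conjI ballI)
    fix dS and t :: nat assume "t \<in> {1, 2}"
    then consider "t = 1" | "t = 2" by blast
    then show "D_incl M (prev_filt M X e1 t) (dS t) (dSstar t)"
    proof cases
      case 1 then show ?thesis using D1 by (simp add: prev_filt_def assms(10))
    next
      case 2 then show ?thesis using D2 by (simp add: prev_filt_def assms(10))
    qed
  qed (use NA in auto)
  show ?thesis
    using part1 part2[OF assms(1,2,11,12)] part3[OF assms(1-4) ind2 assms(6-12)] by blast
qed


end
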